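(* For every $f\in G_{\mathcal S}$, let $\mathcal R(f):=\big(f^{\circ-1}\big)^{\vdash-1}$, where $f^{\circ-1}$ is the inverse of $f$ for $\circ$ and $h^{\vdash-1}$ denotes the inverse of $h$ for $\vdash$. Then $$f=\mathcal R(f)\dashv f.$$
   Context: A reduced plane tree is a rooted plane tree in which every internal node has at least two children (a single leaf is allowed). Trees are encoded as words in noncommuting letters $S_0,S_1,\dots$ by reading nodes in preorder and writing $S_{k-1}$ for a node with $k$ children (a leaf is $S_0$); series are formal linear combinations of such words. For a tree $t_0$ with $n$ leaves and trees $t_1,\dots,t_n$, $t_0\circ(t_1,\dots,t_n)$ is obtained by replacing the leaves of $t_0$, from left to right, by $t_1,\dots,t_n$; this is extended multilinearly to series. The Schröder group $G_{\mathcal S}$ consists of series $p=S_0+\sum_{n\ge2}p_n$, $p_n$ a finite linear combination of trees with $n$ leaves, with product $p\circ q=q+\sum_{n\ge2}p_n\circ(q,\dots,q)$ (a group with identity $S_0$). For $f=S_0+\sum_{n\ge2}f_n$ and $g$ in $G_{\mathcal S}$ define $$f\dashv g=S_0+\sum_{n\ge2}f_n\circ(\underbrace{g,\dots,g}_{n-1},S_0),\qquad f\vdash g=g+\sum_{n\ge2}f_n\circ(\underbrace{S_0,\dots,S_0}_{n-1},g).$$ $G_{\mathcal S}$ is a group under $\vdash$ with identity $S_0$. *)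

theory Defs
  imports Main
begin

text \<open>A leaf is a node
with no children (the letter S_0); a node with k children is the letter S_(k-1).
The preorder word encoding is a bijection onto this datatype.\<close>

datatype tree = Node "tree list"

abbreviation Leaf :: tree where "Leaf \<equiv> Node []"

fun reduced :: "tree \<Rightarrow> bool" where
  "reduced (Node cs) = ((cs = [] \<or> 2 \<le> length cs) \<and> (\<forall>c\<in>set cs. reduced c))"

fun leaves :: "tree \<Rightarrow> nat" where
  "leaves (Node cs) = (if cs = [] then 1 else sum_list (map leaves cs))"

text \<open>Grafting: t0 with n leaves, list ts of n trees; the leaves of t0 are
replaced from left to right by the elements of ts.\<close>

function graft :: "tree \<Rightarrow> tree list \<Rightarrow> tree" where
  "graft (Node cs) ts =
     (if cs = [] then hd ts
      else Node (map (\<lambda>i. graft (cs ! i)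
                  (take (leaves (cs ! i)) (drop (sum_list (map leaves (take i cs))) ts)))
                [0..<length cs]))"
  by pat_completeness auto
termination
proof (relation "measure (\<lambda>(t, ts). size t)")
  show "wf (measure (\<lambda>(t, ts). size t))" by simp
next
  fix cs :: "tree list" and ts :: "tree list" and i
  assume "i \<in> set [0..<length cs]"
  then have "cs ! i \<in> set cs" by simp
  then have "size (cs ! i) < Suc (size_list size cs)"
    using size_list_estimation' by (metis le_imp_less_Suc order_refl)
  then show "((cs ! i, take (leaves (cs ! i)) (drop (sum_list (map leaves (take i cs))) ts)),
              Node cs, ts) \<in> measure (\<lambda>(t, ts). size t)" by simp
qed

text \<open>Series: formal (possibly infinite) linear combinations of trees, i.e.
coefficient functions. Only reduced trees may carry nonzero coefficients.\<close>

type_synonym 'a series = "tree \<Rightarrow> 'a"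

definition S0 :: "'a::field series" where
  "S0 = (\<lambda>t. if t = Leaf then 1 else 0)"

definition splus :: "'a::field series \<Rightarrow> 'a series \<Rightarrow> 'a series" where
  "splus p q = (\<lambda>t. p t + q t)"

text \<open>The Schroeder group: series S_0 + sum_{n>=2} p_n supported on reduced trees.
(Only S_0 is a reduced tree with one leaf; each p_n is automatically a finite
combination since there are finitely many reduced trees with n leaves.)\<close>

definition GS :: "'a::field series set" where
  "GS = {p. p Leaf = 1 \<and> (\<forall>t. p t \<noteq> 0 \<longrightarrow> reduced t)}"

text \<open>Multilinear substitution into the components of degree n >= 2:
  sum_{n>=2} p_n \<circ> (Q n 0, ..., Q n (n-1)).\<close>

definition subst :: "'a::field series \<Rightarrow> (nat \<Rightarrow> nat \<Rightarrow> 'a series) \<Rightarrow> 'a series" where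
  "subst p Q = (\<lambda>t. \<Sum>(t0, ts) \<in> {(t0, ts). 2 \<le> leaves t0 \<and> length ts = leaves t0 \<and> graft t0 ts = t}.
                    p t0 * (\<Prod>i<leaves t0. Q (leaves t0) i (ts ! i)))"

definition comp :: "'a::field series \<Rightarrow> 'a series \<Rightarrow> 'a series" where
  "comp p q = splus q (subst p (\<lambda>n i. q))"

definition dashv :: "'a::field series \<Rightarrow> 'a series \<Rightarrow> 'a series" where
  "dashv f g = splus S0 (subst f (\<lambda>n i. if i < n - 1 then g else S0))"

definition vdash :: "'a::field series \<Rightarrow> 'a series \<Rightarrow> 'a series" where
  "vdash f g = splus g (subst f (\<lambda>n i. if i < n - 1 then S0 else g))"

definition comp_inv :: "'a::field series \<Rightarrow> 'a series" where
  "comp_inv f = (THE h. h \<in> GS \<and> comp f h = S0 \<and> comp h f = S0)"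

definition vdash_inv :: "'a::field series \<Rightarrow> 'a series" where
  "vdash_inv f = (THE h. h \<in> GS \<and> vdash f h = S0 \<and> vdash h f = S0)"

definition RR :: "'a::field series \<Rightarrow> 'a series" where
  "RR f = vdash_inv (comp_inv f)"

end

theory Submission
  imports Defs "HOL-Library.FuncSet"
begin


fun chunks :: "nat list \<Rightarrow> 'b list \<Rightarrow> 'b list list" where
  "chunks [] xs = []"
| "chunks (m#ms) xs = take m xs # chunks ms (drop m xs)"

lemma length_chunks[simp]: "length (chunks ms xs) = length ms"
  by (induction ms arbitrary: xs) auto

lemma chunks_eq_Nil[simp]: "chunks ms xs = [] \<longleftrightarrow> ms = []"
  by (cases ms) auto

lemma concat_chunks: "length xs = sum_list ms \<Longrightarrow> concat (chunks ms xs) = xs"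
  by (induction ms arbitrary: xs) auto

lemma map_length_chunks: "length xs = sum_list ms \<Longrightarrow> map length (chunks ms xs) = ms"
  by (induction ms arbitrary: xs) (auto simp: min_def)

lemma chunks_concat: "chunks (map length xss) (concat xss) = xss"
  by (induction xss) auto

lemma nth_chunks: "i < length ms \<Longrightarrow> chunks ms xs ! i = take (ms!i) (drop (sum_list (take i ms)) xs)"
proof (induction ms arbitrary: xs i)
  case Nil then show ?case by simp
next
  case (Cons m ms)
  then show ?case by (cases i) (auto simp: drop_drop add.commute)
qed

lemma set_chunks: "ys \<in> set (chunks ms xs) \<Longrightarrow> set ys \<subseteq> set xs"
  by (induction ms arbitrary: xs) (auto dest: in_set_takeD in_set_dropD)

lemma chunks_map2: "chunks ms (map2 f xs ys) = map2 (map2 f) (chunks ms xs) (chunks ms ys)"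
  by (induction ms arbitrary: xs ys) (auto simp: take_map drop_map take_zip drop_zip)

lemma chunks_group:
  "length wss = sum_list ms \<Longrightarrow>
   chunks (map (\<lambda>ws. sum_list (map length ws)) (chunks ms wss)) (concat wss) = map concat (chunks ms wss)"
proof (induction ms arbitrary: wss)
  case Nil then show ?case by simp
next
  case (Cons m ms)
  have e: "concat wss = concat (take m wss) @ concat (drop m wss)"
    by (metis append_take_drop_id concat_append)
  have l: "sum_list (map length (take m wss)) = length (concat (take m wss))"
    by (simp add: length_concat)
  have t1: "take (length (concat (take m wss))) (concat wss) = concat (take m wss)"
    using e by simp
  have t2: "drop (length (concat (take m wss))) (concat wss) = concat (drop m wss)"
    using e by simp
  have "length (drop m wss) = sum_list ms" using Cons.prems by simp
  note IH = Cons.IH[OF this]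
  show ?case
    by (simp add: l t1 t2 IH)
qed

lemma leaves_pos: "0 < leaves t"
proof (induction t)
  case (Node cs)
  show ?case
  proof (cases "cs = []")
    case False
    then obtain c where c: "c \<in> set cs" by (cases cs) auto
    have "leaves c \<le> sum_list (map leaves cs)"
      using c by (simp add: member_le_sum_list)
    then show ?thesis using Node.IH[OF c] False by simp
  qed simp
qed

lemma leaves_Node: "cs \<noteq> [] \<Longrightarrow> leaves (Node cs) = sum_list (map leaves cs)"
  by simp

lemma graft_Leaf[simp]: "graft Leaf ts = hd ts"
  by (simp add: graft.simps)

lemma graft_Node: "cs \<noteq> [] \<Longrightarrow> graft (Node cs) ts = Node (map2 graft cs (chunks (map leaves cs) ts))"
proof -
  assume ne: "cs \<noteq> []"
  have "map (\<lambda>i. graft (cs ! i)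
                    (take (leaves (cs ! i))
                      (drop (sum_list (map leaves (take i cs))) ts))) [0..<length cs]
        = map2 graft cs (chunks (map leaves cs) ts)"
  proof (rule nth_equalityI)
    fix i assume "i < length (map (\<lambda>i. graft (cs ! i)
                    (take (leaves (cs ! i))
                      (drop (sum_list (map leaves (take i cs))) ts))) [0..<length cs])"
    then have i: "i < length cs" by simp
    then show "map (\<lambda>i. graft (cs ! i)
                    (take (leaves (cs ! i))
                      (drop (sum_list (map leaves (take i cs))) ts))) [0..<length cs] ! i
        = map2 graft cs (chunks (map leaves cs) ts) ! i"
      by (simp add: nth_chunks take_map)
  qed simp
  then show ?thesis using ne by (simp only: graft.simps if_False)
qed

declare graft.simps[simp del]

lemma sum_list_map_concat: "sum_list (map f (concat xss)) = sum_list (map (\<lambda>xs. sum_list (map f xs)) xss)"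
  by (induction xss) auto

lemma chunks_map: "chunks ms (map f xs) = map (map f) (chunks ms xs)"
  by (induction ms arbitrary: xs) (auto simp: take_map drop_map)

lemma length_chunks_nth:
  "length xs = sum_list ms \<Longrightarrow> i < length ms \<Longrightarrow> length (chunks ms xs ! i) = ms ! i"
  using map_length_chunks[of xs ms] by (metis length_chunks nth_map)

lemma leaves_graft:
  "length ts = leaves t0 \<Longrightarrow> leaves (graft t0 ts) = sum_list (map leaves ts)"
proof (induction t0 arbitrary: ts)
  case (Node cs)
  show ?case
  proof (cases "cs = []")
    case True
    then obtain u where "ts = [u]" using Node.prems by (cases ts) auto
    then show ?thesis using True by simp
  next
    case False
    define css where "css = chunks (map leaves cs) ts"
    have lts: "length ts = sum_list (map leaves cs)" using Node.prems False by simp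
    have len: "\<And>i. i < length cs \<Longrightarrow> length (css ! i) = leaves (cs ! i)"
      unfolding css_def using length_chunks_nth[OF lts] by simp
    have "map leaves (map2 graft cs css) = map (\<lambda>u. sum_list (map leaves u)) css"
    proof (rule nth_equalityI)
      show "length (map leaves (map2 graft cs css)) = length (map (\<lambda>u. sum_list (map leaves u)) css)"
        by (simp add: css_def)
      fix i assume "i < length (map leaves (map2 graft cs css))"
      then have i: "i < length cs" by (simp add: css_def)
      then show "map leaves (map2 graft cs css) ! i = map (\<lambda>u. sum_list (map leaves u)) css ! i"
        using Node.IH[OF nth_mem[OF i] len[OF i]] by (simp add: css_def)
    qed
    then have "leaves (graft (Node cs) ts) = sum_list (map (\<lambda>u. sum_list (map leaves u)) css)"
      using False by (simp add: graft_Node css_def[symmetric]) (simp add: css_def)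
    also have "\<dots> = sum_list (map leaves (concat css))"
      by (simp add: sum_list_map_concat)
    also have "concat css = ts" unfolding css_def using concat_chunks[OF lts] .
    finally show ?thesis .
  qed
qed

lemma graft_assoc:
  "length ts = leaves t0 \<Longrightarrow> map length wss = map leaves ts \<Longrightarrow>
   graft (graft t0 ts) (concat wss) = graft t0 (map2 graft ts wss)"
proof (induction t0 arbitrary: ts wss)
  case (Node cs)
  show ?case
  proof (cases "cs = []")
    case True
    then obtain u where u: "ts = [u]" using Node.prems by (cases ts) auto
    have "length (map length wss) = length (map leaves ts)" using Node.prems(2) by simp
    then have "length wss = 1" using u by simp
    then obtain w where "wss = [w]" by (cases wss) auto
    then show ?thesis using True u by simp
  next
    case False
    define ms where "ms = map leaves cs"
    define css where "css = chunks ms ts"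
    define wsc where "wsc = chunks ms wss"
    define gs where "gs = map2 graft cs css"
    have lts: "length ts = sum_list ms" using Node.prems False by (simp add: ms_def)
    have lwss: "length wss = sum_list ms" using lts Node.prems(2) by (metis length_map)
    have lcss: "length css = length cs" and lwsc: "length wsc = length cs" and lgs: "length gs = length cs"
      by (simp_all add: css_def wsc_def gs_def ms_def)
    have len: "\<And>i. i < length cs \<Longrightarrow> length (css ! i) = leaves (cs ! i)"
      unfolding css_def using length_chunks_nth[OF lts] by (simp add: ms_def)
    have mm: "map (map length) wsc = map (map leaves) css"
      unfolding wsc_def css_def chunks_map[symmetric] using Node.prems(2) by simp
    have mmi: "\<And>i. i < length cs \<Longrightarrow> map length (wsc ! i) = map leaves (css ! i)"
    proof -
      fix i assume i: "i < length cs"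
      have "map (map length) wsc ! i = map (map leaves) css ! i" using mm by simp
      then show "map length (wsc ! i) = map leaves (css ! i)" using i lwsc lcss by simp
    qed
    have g0: "graft (Node cs) ts = Node gs" using False by (simp add: graft_Node gs_def css_def ms_def)
    have gsne: "gs \<noteq> []" using lgs False by auto
    have lg: "map leaves gs = map (\<lambda>ws. sum_list (map length ws)) wsc"
    proof (rule nth_equalityI)
      show "length (map leaves gs) = length (map (\<lambda>ws. sum_list (map length ws)) wsc)"
        using lgs lwsc by simp
      fix i assume "i < length (map leaves gs)"
      then have i: "i < length cs" using lgs by simp
      have "leaves (gs ! i) = sum_list (map leaves (css ! i))"
        using leaves_graft[OF len[OF i]] i lcss by (simp add: gs_def)
      also have "\<dots> = sum_list (map length (wsc ! i))" using mmi[OF i] by simp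
      finally show "map leaves gs ! i = map (\<lambda>ws. sum_list (map length ws)) wsc ! i"
        using i lgs lwsc by simp
    qed
    have ch: "chunks (map leaves gs) (concat wss) = map concat wsc"
      unfolding lg wsc_def using chunks_group[OF lwss] .
    have "graft (graft (Node cs) ts) (concat wss) = Node (map2 graft gs (map concat wsc))"
      using gsne by (simp add: g0 graft_Node ch)
    also have "map2 graft gs (map concat wsc) = map2 graft cs (map2 (map2 graft) css wsc)"
    proof (rule nth_equalityI)
      show "length (map2 graft gs (map concat wsc)) = length (map2 graft cs (map2 (map2 graft) css wsc))"
        using lgs lwsc lcss by simp
      fix i assume "i < length (map2 graft gs (map concat wsc))"
      then have i: "i < length cs" using lgs lwsc by simp
      show "map2 graft gs (map concat wsc) ! i = map2 graft cs (map2 (map2 graft) css wsc) ! i"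
        using Node.IH[OF nth_mem[OF i] len[OF i] mmi[OF i]] i lgs lwsc lcss
        by (simp add: gs_def)
    qed
    also have "map2 (map2 graft) css wsc = chunks ms (map2 graft ts wss)"
      by (simp add: chunks_map2 css_def wsc_def)
    also have "Node (map2 graft cs (chunks ms (map2 graft ts wss))) = graft (Node cs) (map2 graft ts wss)"
      using False by (simp add: graft_Node ms_def)
    finally show ?thesis .
  qed
qed

lemma chunks_replicate: "chunks ms (replicate (sum_list ms) x) = map (\<lambda>m. replicate m x) ms"
  by (induction ms) (auto simp: replicate_add)

lemma graft_replicate_Leaf: "graft t (replicate (leaves t) Leaf) = t"
proof (induction t)
  case (Node cs)
  show ?case
  proof (cases "cs = []")
    case False
    have "map2 graft cs (chunks (map leaves cs) (replicate (leaves (Node cs)) Leaf)) = cs"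
    proof (rule nth_equalityI)
      fix i assume "i < length (map2 graft cs (chunks (map leaves cs) (replicate (leaves (Node cs)) Leaf)))"
      then have i: "i < length cs" by simp
      show "map2 graft cs (chunks (map leaves cs) (replicate (leaves (Node cs)) Leaf)) ! i = cs ! i"
        using False i Node.IH[OF nth_mem[OF i]]
        by (simp add: chunks_replicate[of "map leaves cs", simplified])
    qed simp
    then show ?thesis using False by (simp add: graft_Node)
  qed simp
qed

lemma size_Node: "size (Node cs) = Suc (sum_list (map size cs) + length cs)"
  by (simp only: tree.size size_list_conv_sum_list)

lemma size_pos: "0 < size (t::tree)"
  by (cases t) (simp add: size_Node)

lemma size_child: "x \<in> set xs \<Longrightarrow> size x < size (Node xs)"
proof -
  assume "x \<in> set xs"
  then have "size x \<le> sum_list (map size xs)" by (simp add: member_le_sum_list)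
  then show ?thesis by (simp add: size_Node size_list_conv_sum_list)
qed

lemma sum_list_map_le_nth:
  "length xs = length ys \<Longrightarrow> (\<And>i. i < length xs \<Longrightarrow> f (xs!i) \<le> (g (ys!i) :: nat)) \<Longrightarrow>
   sum_list (map f xs) \<le> sum_list (map g ys)"
proof (induction xs ys rule: list_induct2)
  case (Cons x xs y ys)
  have "f x \<le> g y" using Cons.prems[of 0] by simp
  moreover have "sum_list (map f xs) \<le> sum_list (map g ys)"
    using Cons.IH Cons.prems[of "Suc _"] by auto
  ultimately show ?case by simp
qed simp

lemma size_graft:
  "length ts = leaves t0 \<Longrightarrow> size t0 \<le> size (graft t0 ts) \<and> (\<forall>u\<in>set ts. size u \<le> size (graft t0 ts))"
proof (induction t0 arbitrary: ts)
  case (Node cs)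
  show ?case
  proof (cases "cs = []")
    case True
    then obtain u where "ts = [u]" using Node.prems by (cases ts) auto
    then show ?thesis using True size_pos[of u] by simp
  next
    case False
    define css where "css = chunks (map leaves cs) ts"
    have lts: "length ts = sum_list (map leaves cs)" using Node.prems False by simp
    have len: "\<And>i. i < length cs \<Longrightarrow> length (css ! i) = leaves (cs ! i)"
      unfolding css_def using length_chunks_nth[OF lts] by simp
    have lcss: "length css = length cs" by (simp add: css_def)
    have g: "graft (Node cs) ts = Node (map2 graft cs css)" using False by (simp add: graft_Node css_def)
    have "sum_list (map size cs) \<le> sum_list (map size (map2 graft cs css))"
      by (rule sum_list_map_le_nth) (use lcss Node.IH len in auto)
    then have A: "size (Node cs) \<le> size (graft (Node cs) ts)"
      unfolding g size_Node using lcss by simp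
    have B: "size u \<le> size (graft (Node cs) ts)" if u: "u \<in> set ts" for u
    proof -
      have "u \<in> set (concat css)" using u concat_chunks[OF lts] by (simp add: css_def)
      then obtain ys where ys: "ys \<in> set css" "u \<in> set ys" by auto
      then obtain i where i: "i < length css" and ui: "u \<in> set (css ! i)"
        by (metis in_set_conv_nth)
      have "size u \<le> size (graft (cs!i) (css!i))"
        using Node.IH[OF nth_mem len] i lcss ui by auto
      also have "\<dots> < size (Node (map2 graft cs css))"
        by (rule size_child) (use i lcss in \<open>auto simp: set_zip intro!: image_eqI[where x="(cs!i, css!i)"]\<close>)
      finally show ?thesis using g by simp
    qed
    show ?thesis using A B by blast
  qed
qed

lemma leaves_le_size: "leaves t \<le> size t"
proof (induction t)
  case (Node cs)
  show ?case
  proof (cases "cs = []")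
    case False
    have "sum_list (map leaves cs) \<le> sum_list (map size cs)"
      using Node.IH by (intro sum_list_mono) auto
    then show ?thesis using False by (simp add: size_Node size_list_conv_sum_list)
  qed simp
qed

lemma length_le_sum_size: "length cs \<le> sum_list (map size (cs::tree list))"
proof (induction cs)
  case (Cons a cs)
  then show ?case using size_pos[of a] by simp
qed simp

lemma finite_size_le: "finite {t::tree. size t \<le> n}"
proof (induction n)
  case 0
  have "{t::tree. size t \<le> 0} = {}"
  proof -
    { fix t :: tree have "0 < size t" by (rule size_pos) }
    then show ?thesis by force
  qed
  then show ?case by (metis finite.emptyI)
next
  case (Suc n)
  have "{t::tree. size t \<le> Suc n} \<subseteq> Node ` {cs. set cs \<subseteq> {t. size t \<le> n} \<and> length cs \<le> n}"
  proof
    fix t :: tree assume "t \<in> {t. size t \<le> Suc n}"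
    obtain cs where t: "t = Node cs" by (cases t)
    then have s: "sum_list (map size cs) + length cs \<le> n" using \<open>t \<in> _\<close> by (simp only: size_Node mem_Collect_eq)
    have "\<forall>c\<in>set cs. size c \<le> n"
    proof
      fix c assume "c \<in> set cs"
      then have "size c \<le> sum_list (map size cs)" by (simp add: member_le_sum_list)
      then show "size c \<le> n" using s by linarith
    qed
    moreover have "length cs \<le> n" using s by linarith
    ultimately show "t \<in> Node ` {cs. set cs \<subseteq> {t. size t \<le> n} \<and> length cs \<le> n}"
      using t by auto
  qed
  moreover have "finite {cs. set cs \<subseteq> {t::tree. size t \<le> n} \<and> length cs \<le> n}"
    using Suc by (rule finite_lists_length_le)
  ultimately show ?case by (meson finite_imageI finite_subset)
qed

definition D :: "tree \<Rightarrow> (tree \<times> tree list) set" where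
  "D t = {(t0, ts). length ts = leaves t0 \<and> graft t0 ts = t}"

lemma finite_D: "finite (D t)"
proof -
  have "D t \<subseteq> {t0. size t0 \<le> size t} \<times> {ts. set ts \<subseteq> {u. size u \<le> size t} \<and> length ts \<le> size t}"
  proof
    fix x assume "x \<in> D t"
    then obtain t0 ts where x: "x = (t0, ts)" and l: "length ts = leaves t0" and g: "graft t0 ts = t"
      by (auto simp: D_def)
    have "size t0 \<le> size t" using size_graft[OF l] g by simp
    moreover have "length ts \<le> size t" using size_graft[OF l] g l leaves_le_size[of t0] by simp
    moreover have "set ts \<subseteq> {u. size u \<le> size t}" using size_graft[OF l] g by auto
    ultimately show "x \<in> {t0. size t0 \<le> size t} \<times> {ts. set ts \<subseteq> {u. size u \<le> size t} \<and> length ts \<le> size t}"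
      using x by simp
  qed
  moreover have "finite ({t0::tree. size t0 \<le> size t} \<times> {ts. set ts \<subseteq> {u::tree. size u \<le> size t} \<and> length ts \<le> size t})"
    by (intro finite_cartesian_product finite_size_le finite_lists_length_le)
  ultimately show ?thesis by (rule finite_subset)
qed



lemma graft_Node_ne: "cs \<noteq> [] \<Longrightarrow> graft (Node cs) ts \<noteq> Leaf"
  by (simp add: graft_Node)

lemma D_Leaf: "D Leaf = {(Leaf, [Leaf])}"
proof
  show "D Leaf \<subseteq> {(Leaf, [Leaf])}"
  proof
    fix x assume "x \<in> D Leaf"
    then obtain t0 ts where x: "x = (t0, ts)" and l: "length ts = leaves t0" and g: "graft t0 ts = Leaf"
      by (auto simp: D_def)
    obtain cs where t0: "t0 = Node cs" by (cases t0)
    have "cs = []" using g graft_Node_ne t0 by blast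
    then obtain u where "ts = [u]" using l t0 by (cases ts) auto
    then show "x \<in> {(Leaf, [Leaf])}" using x t0 \<open>cs = []\<close> g by simp
  qed
  show "{(Leaf, [Leaf])} \<subseteq> D Leaf" by (simp add: D_def)
qed

lemma D_Leaf_top: "(Leaf, ts) \<in> D t \<longleftrightarrow> ts = [t]"
  by (cases ts) (auto simp: D_def)

lemma mem_D: "(t0, ts) \<in> D t \<longleftrightarrow> length ts = leaves t0 \<and> graft t0 ts = t"
  by (simp add: D_def)

lemma reduced_leaves: "reduced t \<Longrightarrow> t \<noteq> Leaf \<Longrightarrow> 2 \<le> leaves t"
proof -
  assume r: "reduced t" and n: "t \<noteq> Leaf"
  obtain cs where t: "t = Node cs" by (cases t)
  then have ne: "cs \<noteq> []" using n by simp
  then have l2: "2 \<le> length cs" using r t by simp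
  have "length cs \<le> sum_list (map leaves cs)"
  proof -
    have "sum_list (map (\<lambda>_. 1) cs) \<le> sum_list (map leaves cs)"
      by (rule sum_list_mono) (simp add: Suc_leI leaves_pos)
    then show ?thesis by (simp add: sum_list_triv)
  qed
  then show ?thesis using t ne l2 by simp
qed

lemma reduced_graft:
  "length ts = leaves t0 \<Longrightarrow> reduced t0 \<Longrightarrow> (\<forall>u\<in>set ts. reduced u) \<Longrightarrow> reduced (graft t0 ts)"
proof (induction t0 arbitrary: ts)
  case (Node cs)
  show ?case
  proof (cases "cs = []")
    case True
    then obtain u where "ts = [u]" using Node.prems by (cases ts) auto
    then show ?thesis using True Node.prems by simp
  next
    case False
    define css where "css = chunks (map leaves cs) ts"
    have lts: "length ts = sum_list (map leaves cs)" using Node.prems False by simp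
    have len: "\<And>i. i < length cs \<Longrightarrow> length (css ! i) = leaves (cs ! i)"
      unfolding css_def using length_chunks_nth[OF lts] by simp
    have lcss: "length css = length cs" by (simp add: css_def)
    have g: "graft (Node cs) ts = Node (map2 graft cs css)" using False by (simp add: graft_Node css_def)
    have "\<forall>c\<in>set (map2 graft cs css). reduced c"
    proof
      fix c assume "c \<in> set (map2 graft cs css)"
      then obtain i where i: "i < length cs" and c: "c = graft (cs!i) (css!i)"
        using lcss by (auto simp: set_zip)
      have "css ! i \<in> set css" using i lcss by simp
      then have "set (css ! i) \<subseteq> set ts" unfolding css_def by (rule set_chunks)
      then show "reduced c" using Node.IH[OF nth_mem[OF i] len[OF i]] Node.prems(2,3) i c by auto
    qed
    moreover have "2 \<le> length (map2 graft cs css)" using Node.prems(2) False lcss by simp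
    ultimately show ?thesis using g by simp
  qed
qed

definition FS :: "'a::field series \<Rightarrow> (nat \<Rightarrow> nat \<Rightarrow> 'a series) \<Rightarrow> 'a series" where
  "FS p Q = (\<lambda>t. \<Sum>(t0, ts)\<in>D t. p t0 * (\<Prod>i<leaves t0. Q (leaves t0) i (ts ! i)))"

definition U1 :: "'a::field series \<Rightarrow> bool" where
  "U1 p \<longleftrightarrow> (\<forall>t. leaves t = 1 \<longrightarrow> p t = S0 t)"

lemma GS_U1: "p \<in> GS \<Longrightarrow> U1 p"
  unfolding U1_def GS_def S0_def
  using reduced_leaves by fastforce

lemma sum_single_nz:
  assumes "finite A" "a \<in> A" "\<And>x. x \<in> A \<Longrightarrow> x \<noteq> a \<Longrightarrow> f x = 0"
  shows "sum f A = f a"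
proof -
  have "sum f A = f a + sum f (A - {a})" using assms by (simp add: sum.remove)
  also have "sum f (A - {a}) = 0" using assms by (intro sum.neutral) auto
  finally show ?thesis by simp
qed

lemma FS_split:
  assumes "U1 p"
  shows "FS p Q t = Q 1 0 t + subst p Q t"
proof -
  let ?f = "\<lambda>(t0, ts). p t0 * (\<Prod>i<leaves t0. Q (leaves t0) i (ts ! i))"
  let ?B = "{x. 2 \<le> leaves (fst x)}"
  have "FS p Q t = sum ?f (D t \<inter> ?B) + sum ?f (D t - ?B)"
    unfolding FS_def by (rule sum.Int_Diff[OF finite_D])
  moreover have "D t \<inter> ?B = {(t0, ts). 2 \<le> leaves t0 \<and> length ts = leaves t0 \<and> graft t0 ts = t}"
    by (auto simp: D_def)
  moreover have "sum ?f (D t - ?B) = ?f (Leaf, [t])"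
  proof (rule sum_single_nz)
    show "finite (D t - ?B)" using finite_D by simp
    show "(Leaf, [t]) \<in> D t - ?B" by (simp add: D_def)
    fix x assume x: "x \<in> D t - ?B" "x \<noteq> (Leaf, [t])"
    obtain t0 ts where xx: "x = (t0, ts)" by (cases x)
    have "leaves t0 = 1" using x xx leaves_pos[of t0] by auto
    then have "p t0 = S0 t0" using assms by (simp add: U1_def)
    moreover have "t0 \<noteq> Leaf" using x xx D_Leaf_top by auto
    ultimately show "?f x = 0" using xx by (simp add: S0_def)
  qed
  moreover have "p Leaf = 1" using assms by (simp add: U1_def S0_def)
  ultimately show ?thesis by (simp add: subst_def add.commute)
qed

lemma comp_FS: "U1 p \<Longrightarrow> comp p q = FS p (\<lambda>n i. q)"
  by (rule ext) (simp add: comp_def splus_def FS_split)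

lemma dashv_FS: "U1 p \<Longrightarrow> dashv p q = FS p (\<lambda>n i. if i < n - 1 then q else S0)"
  by (rule ext) (simp add: dashv_def splus_def FS_split)

lemma vdash_FS: "U1 p \<Longrightarrow> vdash p q = FS p (\<lambda>n i. if i < n - 1 then S0 else q)"
  by (rule ext) (simp add: vdash_def splus_def FS_split)

lemma FS_S0_right: "FS p (\<lambda>n i. S0) = p"
proof
  fix t
  let ?f = "\<lambda>(t0, ts). p t0 * (\<Prod>i<leaves t0. (S0 (ts ! i) :: 'a))"
  have "FS p (\<lambda>n i. S0) t = sum ?f (D t)" by (simp add: FS_def)
  also have "\<dots> = ?f (t, replicate (leaves t) Leaf)"
  proof (rule sum_single_nz[OF finite_D])
    show "(t, replicate (leaves t) Leaf) \<in> D t" by (simp add: D_def graft_replicate_Leaf)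
    fix x assume x: "x \<in> D t" "x \<noteq> (t, replicate (leaves t) Leaf)"
    obtain t0 ts where xx: "x = (t0, ts)" by (cases x)
    have l: "length ts = leaves t0" and g: "graft t0 ts = t" using x xx by (auto simp: D_def)
    show "?f x = 0"
    proof (cases "\<forall>i<leaves t0. ts ! i = Leaf")
      case True
      then have "ts = replicate (leaves t0) Leaf" using l by (simp add: list_eq_iff_nth_eq)
      then have "t0 = t" using g graft_replicate_Leaf by metis
      then show ?thesis using x xx \<open>ts = _\<close> by simp
    next
      case False
      then obtain i where "i < leaves t0" "ts ! i \<noteq> Leaf" by auto
      then show ?thesis using xx by (auto simp: S0_def intro!: prod_zero)
    qed
  qed
  also have "\<dots> = p t" by (simp add: S0_def)
  finally show "FS p (\<lambda>n i. S0) t = p t" .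
qed

lemma FS_S0_left: "FS S0 Q t = Q 1 0 t"
proof -
  let ?f = "\<lambda>(t0, ts). S0 t0 * (\<Prod>i<leaves t0. Q (leaves t0) i (ts ! i))"
  have "FS S0 Q t = sum ?f (D t)" by (simp add: FS_def)
  also have "\<dots> = ?f (Leaf, [t])"
  proof (rule sum_single_nz[OF finite_D])
    show "(Leaf, [t]) \<in> D t" by (simp add: D_def)
    fix x assume x: "x \<in> D t" "x \<noteq> (Leaf, [t])"
    obtain t0 ts where xx: "x = (t0, ts)" by (cases x)
    have "t0 \<noteq> Leaf" using x xx D_Leaf_top by auto
    then show "?f x = 0" using xx by (simp add: S0_def)
  qed
  also have "\<dots> = Q 1 0 t" by (simp add: S0_def)
  finally show ?thesis .
qed

lemma FS_GS:
  assumes p: "p \<in> GS" and Q: "\<And>n i. Q n i \<in> GS"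
  shows "FS p Q \<in> GS"
proof -
  have "FS p Q Leaf = 1"
    using p Q by (simp add: FS_def D_Leaf GS_def)
  moreover have "FS p Q t = 0" if nr: "\<not> reduced t" for t
    unfolding FS_def
  proof (rule sum.neutral, safe)
    fix t0 ts assume "(t0, ts) \<in> D t"
    then have l: "length ts = leaves t0" and g: "graft t0 ts = t" by (auto simp: D_def)
    show "p t0 * (\<Prod>i<leaves t0. Q (leaves t0) i (ts ! i)) = 0"
    proof (cases "reduced t0")
      case False
      then have "p t0 = 0" using p by (auto simp: GS_def)
      then show ?thesis by simp
    next
      case True
      then obtain u where u: "u \<in> set ts" "\<not> reduced u" using reduced_graft[OF l] g nr by blast
      then obtain i where i: "i < length ts" "ts ! i = u" by (auto simp: in_set_conv_nth)
      have "Q (leaves t0) i (ts ! i) = 0" using Q[of "leaves t0" i] u i by (auto simp: GS_def)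
      then show ?thesis using i l by (auto intro!: prod_zero)
    qed
  qed
  ultimately show ?thesis by (auto simp: GS_def)
qed

lemma S0_GS: "S0 \<in> GS"
  by (simp add: GS_def S0_def)



lemma FS_alt: "FS p Q t = (\<Sum>x\<in>D t. p (fst x) * (\<Prod>i<leaves (fst x). Q (leaves (fst x)) i (snd x ! i)))"
  by (simp add: FS_def split_beta)

lemma prod_lessThan_add: "(\<Prod>k<a+b. f k) = (\<Prod>k<a. f k) * (\<Prod>k<b. f (a + k)) "
  for f :: "nat \<Rightarrow> 'a::comm_monoid_mult"
  by (induction b) (simp_all add: mult.assoc)

lemma prod_concat:
  "(\<Prod>k<length (concat xss). F k (concat xss ! k)) =
   (\<Prod>i<length xss. \<Prod>j<length (xss!i). F (sum_list (take i (map length xss)) + j) (xss!i!j))"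
  for F :: "nat \<Rightarrow> 'b \<Rightarrow> 'a::comm_monoid_mult"
proof (induction xss arbitrary: F)
  case Nil then show ?case by simp
next
  case (Cons xs xss)
  have "(\<Prod>k<length (concat (xs # xss)). F k (concat (xs # xss) ! k)) =
        (\<Prod>k<length xs. F k (concat (xs # xss) ! k)) *
        (\<Prod>k<length (concat xss). F (length xs + k) (concat (xs # xss) ! (length xs + k)))"
    by (simp add: prod_lessThan_add)
  also have "(\<Prod>k<length xs. F k (concat (xs # xss) ! k)) = (\<Prod>k<length xs. F k (xs ! k))"
    by (intro prod.cong) (auto simp: nth_append)
  also have "(\<Prod>k<length (concat xss). F (length xs + k) (concat (xs # xss) ! (length xs + k))) =
             (\<Prod>k<length (concat xss). F (length xs + k) (concat xss ! k))"
    by simp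
  also have "\<dots> = (\<Prod>i<length xss. \<Prod>j<length (xss!i). F (length xs + (sum_list (take i (map length xss)) + j)) (xss!i!j))"
    using Cons.IH[of "\<lambda>k. F (length xs + k)"] .
  also have "(\<Prod>k<length xs. F k (xs ! k)) * \<dots> =
    (\<Prod>i<length (xs # xss). \<Prod>j<length ((xs # xss)!i). F (sum_list (take i (map length (xs # xss))) + j) ((xs # xss)!i!j))"
    unfolding length_Cons prod.lessThan_Suc_shift by (simp add: add.assoc)
  finally show ?case .
qed

definition SL :: "tree \<Rightarrow> ((tree \<times> tree list) \<times> (tree \<times> tree list)) set" where
  "SL t = Sigma (D t) (\<lambda>a. D (fst a))"

definition SR :: "tree \<Rightarrow> ((tree \<times> tree list) \<times> (nat \<Rightarrow> tree \<times> tree list)) set" where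
  "SR t = Sigma (D t) (\<lambda>a. PiE {..<leaves (fst a)} (\<lambda>k. D (snd a ! k)))"

definition jmap :: "(tree \<times> tree list) \<times> (nat \<Rightarrow> tree \<times> tree list) \<Rightarrow> (tree \<times> tree list) \<times> (tree \<times> tree list)" where
  "jmap y = (let t0 = fst (fst y); n = leaves t0;
               TS = map (\<lambda>k. fst (snd y k)) [0..<n]; WS = map (\<lambda>k. snd (snd y k)) [0..<n]
             in ((graft t0 TS, concat WS), (t0, TS)))"

definition imap :: "(tree \<times> tree list) \<times> (tree \<times> tree list) \<Rightarrow> (tree \<times> tree list) \<times> (nat \<Rightarrow> tree \<times> tree list)" where
  "imap x = (let us = snd (fst x); t0 = fst (snd x); ts = snd (snd x);
               css = chunks (map leaves ts) us
             in ((t0, map2 graft ts css), restrict (\<lambda>k. (ts!k, css!k)) {..<leaves t0}))"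

lemma SR_facts:
  assumes y: "((t0, vs), c) \<in> SR t"
  defines "n \<equiv> leaves t0"
  defines "TS \<equiv> map (\<lambda>k. fst (c k)) [0..<n]"
  defines "WS \<equiv> map (\<lambda>k. snd (c k)) [0..<n]"
  shows "length TS = n" "length WS = n" "length vs = n"
    "\<And>k. k < n \<Longrightarrow> length (WS!k) = leaves (TS!k)"
    "\<And>k. k < n \<Longrightarrow> graft (TS!k) (WS!k) = vs!k"
    "\<And>k. k < n \<Longrightarrow> c k = (TS!k, WS!k)"
    "map length WS = map leaves TS"
    "map2 graft TS WS = vs"
    "graft (graft t0 TS) (concat WS) = t"
    "length (concat WS) = leaves (graft t0 TS)"
    "jmap ((t0, vs), c) = ((graft t0 TS, concat WS), (t0, TS))"
proof -
  have d: "(t0, vs) \<in> D t" and c: "c \<in> PiE {..<n} (\<lambda>k. D (vs ! k))"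
    using y by (auto simp: SR_def n_def)
  have ck: "\<And>k. k < n \<Longrightarrow> c k \<in> D (vs ! k)" using c by auto
  show l1: "length TS = n" "length WS = n" by (simp_all add: TS_def WS_def)
  show l2: "length vs = n" using d by (simp add: D_def n_def)
  show l3: "\<And>k. k < n \<Longrightarrow> length (WS!k) = leaves (TS!k)"
    using ck by (auto simp: TS_def WS_def D_def split_beta)
  show l4: "\<And>k. k < n \<Longrightarrow> graft (TS!k) (WS!k) = vs!k"
    using ck by (auto simp: TS_def WS_def D_def split_beta)
  show "\<And>k. k < n \<Longrightarrow> c k = (TS!k, WS!k)" by (simp add: TS_def WS_def)
  show m: "map length WS = map leaves TS"
    using l1 l3 by (intro nth_equalityI) auto
  show m2: "map2 graft TS WS = vs"
    using l1 l2 l4 by (intro nth_equalityI) auto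
  have "graft (graft t0 TS) (concat WS) = graft t0 (map2 graft TS WS)"
    using l1 m by (intro graft_assoc) (simp_all add: n_def)
  then show "graft (graft t0 TS) (concat WS) = t" using m2 d by (simp add: D_def)
  show "length (concat WS) = leaves (graft t0 TS)"
    using l1 m by (simp add: length_concat leaves_graft n_def)
  show "jmap ((t0, vs), c) = ((graft t0 TS, concat WS), (t0, TS))"
    by (simp add: jmap_def Let_def TS_def WS_def n_def)
qed

lemma SL_facts:
  assumes x: "((s, us), (t0, ts)) \<in> SL t"
  defines "css \<equiv> chunks (map leaves ts) us"
  shows "length ts = leaves t0" "length us = sum_list (map leaves ts)"
    "map length css = map leaves ts" "concat css = us"
    "graft t0 (map2 graft ts css) = t"
    "imap ((s, us), (t0, ts)) = ((t0, map2 graft ts css), restrict (\<lambda>k. (ts!k, css!k)) {..<leaves t0})"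
    "graft t0 ts = s"
proof -
  have d1: "(s, us) \<in> D t" and d2: "(t0, ts) \<in> D s" using x by (auto simp: SL_def)
  show l: "length ts = leaves t0" and g: "graft t0 ts = s" using d2 by (auto simp: D_def)
  show lu: "length us = sum_list (map leaves ts)" using d1 g leaves_graft[OF l] by (auto simp: D_def)
  show m: "map length css = map leaves ts" using lu by (simp add: css_def map_length_chunks)
  show cc: "concat css = us" using lu by (simp add: css_def concat_chunks)
  have "graft (graft t0 ts) (concat css) = graft t0 (map2 graft ts css)"
    using l m by (rule graft_assoc)
  then show "graft t0 (map2 graft ts css) = t" using g cc d1 by (simp add: D_def)
  show "imap ((s, us), (t0, ts)) = ((t0, map2 graft ts css), restrict (\<lambda>k. (ts!k, css!k)) {..<leaves t0})"
    by (simp add: imap_def Let_def css_def)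
qed

lemma FS_assoc:
  fixes p :: "'a::field series"
  assumes R: "\<And>ms i j. \<forall>m\<in>set ms. 0 < m \<Longrightarrow> i < length ms \<Longrightarrow> j < ms!i \<Longrightarrow>
      R (sum_list ms) (sum_list (take i ms) + j) = Rl (length ms) i (ms!i) j"
  shows "FS (FS p Q) R t = FS p (\<lambda>n i. FS (Q n i) (Rl n i)) t"
proof -
  define hL where "hL = (\<lambda>x::(tree \<times> tree list) \<times> (tree \<times> tree list).
      p (fst (snd x)) * (\<Prod>i<leaves (fst (snd x)). Q (leaves (fst (snd x))) i (snd (snd x) ! i)) *
      (\<Prod>k<leaves (fst (fst x)). R (leaves (fst (fst x))) k (snd (fst x) ! k)))"
  define gR where "gR = (\<lambda>y::(tree \<times> tree list) \<times> (nat \<Rightarrow> tree \<times> tree list).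
      p (fst (fst y)) * (\<Prod>i<leaves (fst (fst y)). Q (leaves (fst (fst y))) i (fst (snd y i)) *
         (\<Prod>j<leaves (fst (snd y i)). Rl (leaves (fst (fst y))) i (leaves (fst (snd y i))) j (snd (snd y i) ! j))))"
  have L: "FS (FS p Q) R t = sum hL (SL t)"
  proof -
    have "FS (FS p Q) R t = (\<Sum>a\<in>D t. \<Sum>b\<in>D (fst a). hL (a, b))"
      unfolding FS_alt hL_def by (simp add: sum_distrib_right)
    also have "\<dots> = sum hL (SL t)"
      unfolding SL_def by (subst sum.Sigma) (simp_all add: finite_D split_beta)
    finally show ?thesis .
  qed
  have Rr: "FS p (\<lambda>n i. FS (Q n i) (Rl n i)) t = sum gR (SR t)"
  proof -
    have "FS p (\<lambda>n i. FS (Q n i) (Rl n i)) t =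
       (\<Sum>a\<in>D t. p (fst a) * (\<Prod>i<leaves (fst a). \<Sum>y\<in>D (snd a ! i).
           Q (leaves (fst a)) i (fst y) * (\<Prod>j<leaves (fst y). Rl (leaves (fst a)) i (leaves (fst y)) j (snd y ! j))))"
      unfolding FS_alt ..
    also have "\<dots> = (\<Sum>a\<in>D t. \<Sum>c\<in>PiE {..<leaves (fst a)} (\<lambda>k. D (snd a ! k)). gR (a, c))"
      unfolding gR_def
      by (intro sum.cong refl) (simp add: prod_sum_PiE finite_D sum_distrib_left)
    also have "\<dots> = sum gR (SR t)"
      unfolding SR_def by (subst sum.Sigma) (simp_all add: finite_D split_beta finite_PiE)
    finally show ?thesis .
  qed
  have "sum gR (SR t) = sum hL (SL t)"
  proof (rule sum.reindex_bij_witness[of "SR t" imap jmap])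
    fix y assume y: "y \<in> SR t"
    obtain t0 vs c where yy: "y = ((t0, vs), c)" by (metis prod.collapse)
    note F = SR_facts[OF y[unfolded yy]]
    define n where "n = leaves t0"
    define TS where "TS = map (\<lambda>k. fst (c k)) [0..<n]"
    define WS where "WS = map (\<lambda>k. snd (c k)) [0..<n]"
    note F = F[folded n_def, folded TS_def WS_def]
    have c: "c \<in> PiE {..<n} (\<lambda>k. D (vs ! k))" using y yy by (auto simp: SR_def n_def)
    have jy: "jmap y = ((graft t0 TS, concat WS), (t0, TS))" using yy F(11) by simp
    show "jmap y \<in> SL t"
      unfolding jy SL_def using F(1,9,10) by (simp add: D_def n_def)
    have "((graft t0 TS, concat WS), (t0, TS)) \<in> SL t"
      unfolding SL_def using F(1,9,10) by (simp add: D_def n_def)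
    note G = SL_facts[OF this]
    have ch: "chunks (map leaves TS) (concat WS) = WS" using F(7) by (metis chunks_concat)
    have rc: "restrict (\<lambda>k. (TS ! k, WS ! k)) {..<n} = c"
    proof
      fix k show "restrict (\<lambda>k. (TS ! k, WS ! k)) {..<n} k = c k"
        using c F(6) by (cases "k < n") (auto simp: PiE_def extensional_def)
    qed
    show "imap (jmap y) = y"
      unfolding jy G(6) ch using rc F(8) yy by (simp add: n_def)
    show "hL (jmap y) = gR y"
    proof -
      have N: "leaves (graft t0 TS) = sum_list (map length WS)"
        using F(10) by (simp add: length_concat)
      have "(\<Prod>k<leaves (graft t0 TS). R (leaves (graft t0 TS)) k (concat WS ! k)) =
            (\<Prod>i<length WS. \<Prod>j<length (WS!i).
                R (leaves (graft t0 TS)) (sum_list (take i (map length WS)) + j) (WS!i!j))"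
        using prod_concat[of "R (leaves (graft t0 TS))" WS] F(10) by simp
      also have "\<dots> = (\<Prod>i<n. \<Prod>j<leaves (TS!i). Rl n i (leaves (TS!i)) j (WS!i!j))"
      proof (rule prod.cong)
        fix i assume i: "i \<in> {..<n}"
        show "(\<Prod>j<length (WS!i). R (leaves (graft t0 TS)) (sum_list (take i (map length WS)) + j) (WS!i!j))
            = (\<Prod>j<leaves (TS!i). Rl n i (leaves (TS!i)) j (WS!i!j))"
        proof (rule prod.cong)
          show "{..<length (WS!i)} = {..<leaves (TS!i)}" using F(4) i by simp
          fix j assume j: "j \<in> {..<leaves (TS!i)}"
          have pos: "\<forall>m\<in>set (map length WS). 0 < m" using F(7) leaves_pos by simp
          have "R (sum_list (map length WS)) (sum_list (take i (map length WS)) + j) =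
                Rl (length (map length WS)) i (map length WS ! i) j"
            using R[OF pos] i j F(2,4) by simp
          then show "R (leaves (graft t0 TS)) (sum_list (take i (map length WS)) + j) (WS!i!j) =
                Rl n i (leaves (TS!i)) j (WS!i!j)"
            using N F(2,4) i by simp
        qed
      qed (use F(2) in simp)
      finally have RR: "(\<Prod>k<leaves (graft t0 TS). R (leaves (graft t0 TS)) k (concat WS ! k)) =
          (\<Prod>i<n. \<Prod>j<leaves (TS!i). Rl n i (leaves (TS!i)) j (WS!i!j))" .
      have "gR y = p t0 * (\<Prod>i<n. Q n i (TS!i) *
               (\<Prod>j<leaves (TS!i). Rl n i (leaves (TS!i)) j (WS!i!j)))"
        unfolding gR_def yy using F(6) by (simp add: n_def[symmetric])
      also have "\<dots> = p t0 * (\<Prod>i<n. Q n i (TS!i)) * (\<Prod>i<n. \<Prod>j<leaves (TS!i). Rl n i (leaves (TS!i)) j (WS!i!j))"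
        by (simp add: prod.distrib mult.assoc)
      also have "\<dots> = hL (jmap y)"
        unfolding hL_def jy RR[symmetric] by (simp add: n_def F(1))
      finally show ?thesis by simp
    qed
  next
    fix x assume x: "x \<in> SL t"
    obtain s us t0 ts where xx: "x = ((s, us), (t0, ts))" by (metis prod.collapse)
    define css where "css = chunks (map leaves ts) us"
    note G = SL_facts[OF x[unfolded xx], folded css_def]
    have ix: "imap x = ((t0, map2 graft ts css), restrict (\<lambda>k. (ts!k, css!k)) {..<leaves t0})"
      using xx G(6) by simp
    have lc: "length css = leaves t0" using G(1) by (simp add: css_def)
    have lck: "\<And>k. k < leaves t0 \<Longrightarrow> length (css!k) = leaves (ts!k)"
      using G(3) lc G(1) by (metis nth_map)
    show "imap x \<in> SR t"
      unfolding ix SR_def using G(1,5) lc lck by (auto simp: D_def)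
    have TS: "map (\<lambda>k. fst (restrict (\<lambda>k. (ts!k, css!k)) {..<leaves t0} k)) [0..<leaves t0] = ts"
      using G(1) by (intro nth_equalityI) auto
    have WS: "map (\<lambda>k. snd (restrict (\<lambda>k. (ts!k, css!k)) {..<leaves t0} k)) [0..<leaves t0] = css"
      using lc by (intro nth_equalityI) auto
    show "jmap (imap x) = x"
      unfolding ix jmap_def Let_def using TS WS G(4,7) xx by simp
  qed
  then show ?thesis using L Rr by simp
qed



lemma last_pos_arith:
  fixes ms :: "nat list"
  assumes pos: "\<forall>m\<in>set ms. 0 < m" and i: "i < length ms" and j: "j < ms!i"
  shows "sum_list (take i ms) + j < sum_list ms - Suc 0 \<longleftrightarrow> (i < length ms - Suc 0 \<or> j < ms!i - Suc 0)"
proof -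
  have e: "sum_list ms = sum_list (take i ms) + ms!i + sum_list (drop (Suc i) ms)"
    using i by (metis add.assoc id_take_nth_drop sum_list_append sum_list_simps(2))
  show ?thesis
  proof (cases "i < length ms - Suc 0")
    case True
    then have "drop (Suc i) ms \<noteq> []" by simp
    then obtain a r where "drop (Suc i) ms = a # r" by (cases "drop (Suc i) ms") auto
    moreover have "a \<in> set ms" using \<open>drop (Suc i) ms = a # r\<close> by (metis in_set_dropD list.set_intros(1))
    ultimately have "0 < a" using pos by blast
    then have "1 \<le> a + sum_list r" by linarith
    then have "1 \<le> sum_list (drop (Suc i) ms)" using \<open>drop (Suc i) ms = a # r\<close> by simp
    then show ?thesis using e j True by linarith
  next
    case False
    then have "drop (Suc i) ms = []" by simp
    then have "sum_list ms = sum_list (take i ms) + ms!i" using e by simp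
    then show ?thesis using j False by arith
  qed
qed

lemma comp_GS: "p \<in> GS \<Longrightarrow> q \<in> GS \<Longrightarrow> comp p q \<in> GS"
  by (simp add: comp_FS GS_U1 FS_GS)

lemma dashv_GS: "p \<in> GS \<Longrightarrow> q \<in> GS \<Longrightarrow> dashv p q \<in> GS"
  by (simp add: dashv_FS GS_U1 FS_GS S0_GS)

lemma vdash_GS: "p \<in> GS \<Longrightarrow> q \<in> GS \<Longrightarrow> vdash p q \<in> GS"
  by (simp add: vdash_FS GS_U1 FS_GS S0_GS)

lemma comp_S0_right: "p \<in> GS \<Longrightarrow> comp p S0 = p"
  by (simp add: comp_FS GS_U1 FS_S0_right)

lemma comp_S0_left: "comp S0 p = p"
  using comp_FS[of S0 p] GS_U1[OF S0_GS] by (simp add: FS_S0_left fun_eq_iff)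

lemma vdash_S0_right: "p \<in> GS \<Longrightarrow> vdash p S0 = p"
  by (simp add: vdash_FS GS_U1 FS_S0_right)

lemma vdash_S0_left: "vdash S0 p = p"
  using vdash_FS[of S0 p] GS_U1[OF S0_GS] by (simp add: FS_S0_left fun_eq_iff)

lemma dashv_S0_right: "p \<in> GS \<Longrightarrow> dashv p S0 = p"
  by (simp add: dashv_FS GS_U1 FS_S0_right)

lemma comp_assoc:
  assumes "p \<in> GS" "q \<in> GS" "r \<in> GS"
  shows "comp (comp p q) r = comp p (comp q r)"
proof
  fix t
  have "comp (comp p q) r t = FS (FS p (\<lambda>n i. q)) (\<lambda>n i. r) t"
    by (simp only: comp_FS[OF GS_U1[OF comp_GS[OF assms(1,2)]]]) (simp only: comp_FS[OF GS_U1[OF assms(1)]])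

  also have "\<dots> = FS p (\<lambda>n i. FS q (\<lambda>m j. r)) t"
    by (rule FS_assoc) simp
  also have "\<dots> = comp p (comp q r) t"
    using assms by (simp add: comp_FS GS_U1)
  finally show "comp (comp p q) r t = comp p (comp q r) t" .
qed

lemma vdash_assoc:
  assumes "p \<in> GS" "q \<in> GS" "r \<in> GS"
  shows "vdash (vdash p q) r = vdash p (vdash q r)"
proof
  fix t
  have "vdash (vdash p q) r t = FS (FS p (\<lambda>n i. if i < n - 1 then S0 else q)) (\<lambda>n i. if i < n - 1 then S0 else r) t"
    by (simp only: vdash_FS[OF GS_U1[OF vdash_GS[OF assms(1,2)]]]) (simp only: vdash_FS[OF GS_U1[OF assms(1)]])

  also have "\<dots> = FS p (\<lambda>n i. FS (if i < n - 1 then S0 else q)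
          (\<lambda>m j. if i < n - 1 \<or> j < m - 1 then S0 else r)) t"
    by (rule FS_assoc) (simp add: last_pos_arith)
  also have "(\<lambda>n i. FS (if i < n - 1 then S0 else q) (\<lambda>m j. if i < n - 1 \<or> j < m - 1 then S0 else r))
      = (\<lambda>n i. if i < n - 1 then S0 else vdash q r)"
    using vdash_FS[OF GS_U1[OF assms(2)]] by (auto simp: fun_eq_iff FS_S0_left)
  also have "FS p \<dots> t = vdash p (vdash q r) t"
    using vdash_FS[OF GS_U1[OF assms(1)]] by simp
  finally show "vdash (vdash p q) r t = vdash p (vdash q r) t" .
qed

lemma dashv_dashv:
  assumes "p \<in> GS" "q \<in> GS" "r \<in> GS"
  shows "dashv (dashv p q) r = dashv p (comp q r)"
proof
  fix t
  have "dashv (dashv p q) r t = FS (FS p (\<lambda>n i. if i < n - 1 then q else S0)) (\<lambda>n i. if i < n - 1 then r else S0) t"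
    by (simp only: dashv_FS[OF GS_U1[OF dashv_GS[OF assms(1,2)]]]) (simp only: dashv_FS[OF GS_U1[OF assms(1)]])

  also have "\<dots> = FS p (\<lambda>n i. FS (if i < n - 1 then q else S0)
          (\<lambda>m j. if i < n - 1 \<or> j < m - 1 then r else S0)) t"
    by (rule FS_assoc) (simp add: last_pos_arith)
  also have "(\<lambda>n i. FS (if i < n - 1 then q else S0) (\<lambda>m j. if i < n - 1 \<or> j < m - 1 then r else S0))
      = (\<lambda>n i. if i < n - 1 then comp q r else S0)"
    using comp_FS[OF GS_U1[OF assms(2)]] by (auto simp: fun_eq_iff FS_S0_left)
  also have "FS p \<dots> t = dashv p (comp q r) t"
    using dashv_FS[OF GS_U1[OF assms(1)]] by simp
  finally show "dashv (dashv p q) r t = dashv p (comp q r) t" .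
qed

lemma vdash_dashv:
  assumes "p \<in> GS" "q \<in> GS"
  shows "vdash (dashv p q) q = comp p q"
proof
  fix t
  have "vdash (dashv p q) q t = FS (FS p (\<lambda>n i. if i < n - 1 then q else S0)) (\<lambda>n i. if i < n - 1 then S0 else q) t"
    by (simp only: vdash_FS[OF GS_U1[OF dashv_GS[OF assms(1,2)]]]) (simp only: dashv_FS[OF GS_U1[OF assms(1)]])
  also have "\<dots> = FS p (\<lambda>n i. FS (if i < n - 1 then q else S0)
          (\<lambda>m j. if i < n - 1 \<or> j < m - 1 then S0 else q)) t"
    by (rule FS_assoc) (simp add: last_pos_arith)
  also have "(\<lambda>n i. FS (if i < n - 1 then q else S0) (\<lambda>m j. if i < n - 1 \<or> j < m - 1 then S0 else q))
      = (\<lambda>n i. q)"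
  proof -
    have H: "\<And>n i. FS (if i < n - 1 then q else S0) (\<lambda>m j. if i < n - 1 \<or> j < m - 1 then S0 else q) = q"
    proof -
    fix n i
    show "FS (if i < n - 1 then q else S0) (\<lambda>m j. if i < n - 1 \<or> j < m - 1 then S0 else q) = q"
    proof (cases "i < n - 1")
      case True
      then show ?thesis using FS_S0_right[of q] by simp
    next
      case False
      then show ?thesis by (simp add: fun_eq_iff FS_S0_left)
    qed
    qed
    show ?thesis by (rule ext, rule ext, rule H)
  qed
  also have "FS p (\<lambda>n i. q) t = comp p q t"
    using assms by (simp add: comp_FS GS_U1)
  finally show "vdash (dashv p q) q t = comp p q t" .
qed



lemma leaves_lt:
  assumes "2 \<le> leaves t0" "length ts = leaves t0" "graft t0 ts = t" "i < length ts"
  shows "leaves (ts ! i) < leaves t"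
proof -
  define j :: nat where "j = (if i = 0 then 1 else 0)"
  have j: "j < length ts" "j \<noteq> i" using assms by (auto simp: j_def)
  have "leaves t = sum_list (map leaves ts)" using assms leaves_graft by metis
  also have "\<dots> = (\<Sum>k<length ts. leaves (ts ! k))"
    by (simp add: sum_list_sum_nth atLeast0LessThan)
  also have "\<dots> \<ge> (\<Sum>k\<in>{i, j}. leaves (ts ! k))"
    by (rule sum_mono2) (use assms j in auto)
  finally have "leaves (ts ! i) + leaves (ts ! j) \<le> leaves t" using j by simp
  then show ?thesis using leaves_pos[of "ts ! j"] by linarith
qed

definition Qsel :: "(nat \<Rightarrow> nat \<Rightarrow> bool) \<Rightarrow> 'a::field series \<Rightarrow> nat \<Rightarrow> nat \<Rightarrow> 'a series" where
  "Qsel sel x = (\<lambda>n i. if sel n i then x else S0)"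

lemma subst_cong:
  assumes "\<And>u. leaves u < leaves t \<Longrightarrow> x u = y u"
  shows "subst p (Qsel sel x) t = subst p (Qsel sel y) t"
proof -
  have H: "p t0 * (\<Prod>i<leaves t0. Qsel sel x (leaves t0) i (ts ! i)) =
             p t0 * (\<Prod>i<leaves t0. Qsel sel y (leaves t0) i (ts ! i))"
    if a: "2 \<le> leaves t0" "length ts = leaves t0" "graft t0 ts = t" for t0 ts
  proof -
  have "\<And>i. i < leaves t0 \<Longrightarrow> Qsel sel x (leaves t0) i (ts ! i) = Qsel sel y (leaves t0) i (ts ! i)"
    using assms leaves_lt[OF a] a(2) by (simp add: Qsel_def)
  then show "p t0 * (\<Prod>i<leaves t0. Qsel sel x (leaves t0) i (ts ! i)) =
             p t0 * (\<Prod>i<leaves t0. Qsel sel y (leaves t0) i (ts ! i))"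
    by (metis (no_types, lifting) lessThan_iff prod.cong)
  qed
  show ?thesis unfolding subst_def by (intro sum.cong refl) (auto intro: H)
qed

fun it :: "'a::field series \<Rightarrow> (nat \<Rightarrow> nat \<Rightarrow> bool) \<Rightarrow> nat \<Rightarrow> 'a series" where
  "it p sel 0 = S0"
| "it p sel (Suc k) = (\<lambda>t. S0 t - subst p (Qsel sel (it p sel k)) t)"

lemma it_stable: "leaves t \<le> a \<Longrightarrow> leaves t \<le> b \<Longrightarrow> it p sel a t = it p sel b t"
proof (induction a arbitrary: b t)
  case 0 then show ?case using leaves_pos[of t] by simp
next
  case (Suc a)
  then obtain b' where b: "b = Suc b'" using leaves_pos[of t] by (cases b) auto
  have "subst p (Qsel sel (it p sel a)) t = subst p (Qsel sel (it p sel b')) t"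
    by (rule subst_cong) (use Suc b in auto)
  then show ?case using b by simp
qed

definition rinv :: "'a::field series \<Rightarrow> (nat \<Rightarrow> nat \<Rightarrow> bool) \<Rightarrow> 'a series" where
  "rinv p sel = (\<lambda>t. it p sel (leaves t) t)"

lemma rinv_eq: "rinv p sel t = S0 t - subst p (Qsel sel (rinv p sel)) t"
proof -
  obtain a where a: "leaves t = Suc a" using leaves_pos[of t] by (cases "leaves t") auto
  have "subst p (Qsel sel (it p sel a)) t = subst p (Qsel sel (rinv p sel)) t"
  proof (rule subst_cong)
    fix u assume "leaves u < leaves t"
    then have "leaves u \<le> a" using a by simp
    then show "it p sel a u = rinv p sel u" unfolding rinv_def by (rule it_stable[OF _ order.refl])
  qed
  then show ?thesis using a by (simp add: rinv_def)
qed

lemma rinv_FS: "U1 p \<Longrightarrow> sel 1 0 \<Longrightarrow> FS p (Qsel sel (rinv p sel)) = S0"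
proof
  fix t assume "U1 p" "sel 1 0"
  then have "FS p (Qsel sel (rinv p sel)) t = rinv p sel t + subst p (Qsel sel (rinv p sel)) t"
    by (simp add: FS_split Qsel_def)
  then show "FS p (Qsel sel (rinv p sel)) t = S0 t" using rinv_eq[of p sel t] by simp
qed

lemma subst_Leaf: "subst p Q Leaf = 0"
proof -
  have "a = Leaf" if "length b = leaves a" "graft a b = Leaf" for a :: tree and b
  proof -
    have "(a, b) \<in> D Leaf" using that by (simp add: D_def)
    then show ?thesis using D_Leaf by simp
  qed
  then have "{(t0, ts). 2 \<le> leaves t0 \<and> length ts = leaves t0 \<and> graft t0 ts = Leaf} = {}"
    by fastforce
  then show ?thesis unfolding subst_def by (simp only: sum.empty)
qed

lemma rinv_GS:
  assumes p: "p \<in> GS"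
  shows "rinv p sel \<in> GS"
proof -
  have "rinv p sel Leaf = 1" using rinv_eq[of p sel Leaf] by (simp add: subst_Leaf S0_def)
  moreover have "rinv p sel t = 0" if "\<not> reduced t" for t
    using that
  proof (induction "leaves t" arbitrary: t rule: less_induct)
    case less
    have S: "S0 t = 0" using less.prems by (auto simp: S0_def)
    have H: "p t0 * (\<Prod>i<leaves t0. Qsel sel (rinv p sel) (leaves t0) i (ts ! i)) = 0"
      if a: "2 \<le> leaves t0" "length ts = leaves t0" "graft t0 ts = t" for t0 ts
      proof (cases "reduced t0")
        case False
        then have "p t0 = 0" using p by (auto simp: GS_def)
        then show ?thesis by simp
      next
        case True
        then obtain u where u: "u \<in> set ts" "\<not> reduced u"
          using reduced_graft[OF a(2)] a(3) less.prems by blast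
        then obtain i where i: "i < length ts" "ts ! i = u" by (auto simp: in_set_conv_nth)
        have "leaves u < leaves t" using leaves_lt[OF a i(1)] i by simp
        then have "rinv p sel u = 0" using less.hyps u by blast
        moreover have "S0 u = 0" using u by (auto simp: S0_def)
        ultimately have "Qsel sel (rinv p sel) (leaves t0) i (ts ! i) = 0"
          using i by (cases "sel (leaves t0) i") (simp_all add: Qsel_def)
        then show ?thesis using i a(2) by (auto intro!: prod_zero)
      qed
    have "subst p (Qsel sel (rinv p sel)) t = 0"
      unfolding subst_def
    proof (rule sum.neutral, rule ballI)
      fix x assume x: "x \<in> {(t0, ts). 2 \<le> leaves t0 \<and> length ts = leaves t0 \<and> graft t0 ts = t}"
      obtain t0 ts where xx: "x = (t0, ts)" by (cases x)
      have "2 \<le> leaves t0" "length ts = leaves t0" "graft t0 ts = t" using x xx by auto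
      then show "(case x of (t0, ts) \<Rightarrow> p t0 * (\<Prod>i<leaves t0. Qsel sel (rinv p sel) (leaves t0) i (ts ! i))) = 0"
        unfolding xx prod.case by (rule H)
    qed
    then show ?case using rinv_eq[of p sel t] S by simp
  qed
  ultimately show ?thesis by (auto simp: GS_def)
qed

lemma comp_rinv: "p \<in> GS \<Longrightarrow> \<exists>x\<in>GS. comp p x = S0"
proof -
  assume p: "p \<in> GS"
  let ?x = "rinv p (\<lambda>n i. True)"
  have "Qsel (\<lambda>n i. True) ?x = (\<lambda>n i. ?x)" by (simp add: Qsel_def)
  then have "comp p ?x = S0" using rinv_FS[OF GS_U1[OF p], of "\<lambda>n i. True"] comp_FS[OF GS_U1[OF p]] by simp
  then show ?thesis using rinv_GS[OF p] by blast
qed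

lemma vdash_rinv: "p \<in> GS \<Longrightarrow> \<exists>x\<in>GS. vdash p x = S0"
proof -
  assume p: "p \<in> GS"
  let ?sel = "\<lambda>n i. \<not> i < n - 1"
  let ?x = "rinv p ?sel"
  have eq: "Qsel ?sel ?x = (\<lambda>n i. if i < n - 1 then S0 else ?x)" by (simp add: Qsel_def fun_eq_iff)
  have "vdash p ?x = FS p (\<lambda>n i. if i < n - 1 then S0 else ?x)" by (rule vdash_FS[OF GS_U1[OF p]])
  also have "\<dots> = FS p (Qsel ?sel ?x)" by (simp only: eq)
  also have "\<dots> = S0" by (rule rinv_FS[OF GS_U1[OF p]]) simp
  finally have "vdash p ?x = S0" .
  then show ?thesis using rinv_GS[OF p] by blast
qed

lemma comp_inv_prop:
  assumes f: "f \<in> GS"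
  shows "comp_inv f \<in> GS \<and> comp f (comp_inv f) = S0 \<and> comp (comp_inv f) f = S0"
proof -
  obtain g where g: "g \<in> GS" "comp f g = S0" using comp_rinv[OF f] by blast
  obtain k where k: "k \<in> GS" "comp g k = S0" using comp_rinv[OF g(1)] by blast
  have "comp f (comp g k) = f" using k(2) comp_S0_right[OF f] by simp
  then have "f = comp f (comp g k)" by simp
  also have "\<dots> = comp (comp f g) k" by (rule comp_assoc[OF f g(1) k(1), symmetric])
  also have "\<dots> = k" using g by (simp add: comp_S0_left)
  finally have gf: "comp g f = S0" using k by simp
  have uniq: "h = g" if h: "h \<in> GS \<and> comp f h = S0 \<and> comp h f = S0" for h
  proof -
    have "h = comp h (comp f g)" using h g by (simp add: comp_S0_right)
    also have "\<dots> = comp (comp h f) g" using h f g by (intro comp_assoc[symmetric]) auto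
    also have "\<dots> = g" using h by (simp add: comp_S0_left)
    finally show ?thesis .
  qed
  have "comp_inv f = g"
    unfolding comp_inv_def proof (rule the_equality)
    show "g \<in> GS \<and> comp f g = S0 \<and> comp g f = S0" using g gf by simp
  qed (use uniq in blast)
  then show ?thesis using g gf by simp
qed

lemma vdash_inv_prop:
  assumes f: "f \<in> GS"
  shows "vdash_inv f \<in> GS \<and> vdash f (vdash_inv f) = S0 \<and> vdash (vdash_inv f) f = S0"
proof -
  obtain g where g: "g \<in> GS" "vdash f g = S0" using vdash_rinv[OF f] by blast
  obtain k where k: "k \<in> GS" "vdash g k = S0" using vdash_rinv[OF g(1)] by blast
  have "vdash f (vdash g k) = f" using k(2) vdash_S0_right[OF f] by simp
  then have "f = vdash f (vdash g k)" by simp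
  also have "\<dots> = vdash (vdash f g) k" by (rule vdash_assoc[OF f g(1) k(1), symmetric])
  also have "\<dots> = k" using g by (simp add: vdash_S0_left)
  finally have gf: "vdash g f = S0" using k by simp
  have uniq: "h = g" if h: "h \<in> GS \<and> vdash f h = S0 \<and> vdash h f = S0" for h
  proof -
    have "h = vdash h (vdash f g)" using h g by (simp add: vdash_S0_right)
    also have "\<dots> = vdash (vdash h f) g" using h f g by (intro vdash_assoc[symmetric]) auto
    also have "\<dots> = g" using h by (simp add: vdash_S0_left)
    finally show ?thesis .
  qed
  have "vdash_inv f = g"
    unfolding vdash_inv_def proof (rule the_equality)
    show "g \<in> GS \<and> vdash f g = S0 \<and> vdash g f = S0" using g gf by simp
  qed (use uniq in blast)
  then show ?thesis using g gf by simp
qed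



theorem mainTheorem3:
  fixes f :: "'a::field series"
  assumes "f \<in> GS"
  shows "f = dashv (RR f) f"
proof -
  define g where "g = comp_inv f"
  have g: "g \<in> GS" "comp f g = S0" "comp g f = S0" using comp_inv_prop[OF assms] by (simp_all add: g_def)
  define h where "h = vdash_inv g"
  have h: "h \<in> GS" "vdash g h = S0" "vdash h g = S0" using vdash_inv_prop[OF g(1)] by (simp_all add: h_def)
  define h0 where "h0 = dashv f g"
  have h0: "h0 \<in> GS" using dashv_GS[OF assms g(1)] by (simp add: h0_def)
  have h0g: "vdash h0 g = S0" using vdash_dashv[OF assms g(1)] g(2) by (simp add: h0_def)
  have "h0 = vdash h0 (vdash g h)" using h h0 by (simp add: vdash_S0_right)
  also have "\<dots> = vdash (vdash h0 g) h" by (rule vdash_assoc[OF h0 g(1) h(1), symmetric])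
  also have "\<dots> = h" using h0g by (simp add: vdash_S0_left)
  finally have hh: "h0 = h" .
  have "dashv h f = dashv (dashv f g) f" using hh by (simp add: h0_def)
  also have "\<dots> = dashv f (comp g f)" by (rule dashv_dashv[OF assms g(1) assms])
  also have "\<dots> = f" using g assms by (simp add: dashv_S0_right)
  finally show ?thesis by (simp add: RR_def h_def g_def)
qed


end
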